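(* Let $(s_n)$ be a sequence in $\mathbb{R}^{\mathbb{Z}_<}$ all of whose members are real numbers (i.e. every coefficient other than the $\epsilon^0$-coefficient is zero). Then $(s_n)$ is hyper-Cauchy if and only if there exists $N\in\mathbb{N}$ such that $s_m=s_N$ for all $m\ge N$.
   Context: $\mathbb{R}^{\mathbb{Z}_<}$ is the set of formal series $\sum_{i\ge -k}a_i\epsilon^i$ ($k\in\mathbb{N}\cup\{0\}$, $a_i\in\mathbb{R}$), with coefficientwise addition, Cauchy-product multiplication and lexicographic order ($\mathbf{x}<\mathbf{y}$ iff at the least index where coefficients differ, $\mathbf{x}$'s is smaller); $|\cdot|$ is the associated absolute value; $\epsilon=\langle\widehat0,1,0,\dots\rangle$. $(s_n)$ is hyper-Cauchy iff for every $\iota\in\mathbb{R}^{\mathbb{Z}_<}$ with $\iota>0$ there is $N\in\mathbb{N}$ such that $|s_l-s_m|<\iota$ for all $l,m\ge N$. *)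

theory Defs
  imports "HOL-Computational_Algebra.Formal_Laurent_Series"
begin

text \<open>R^{Z<} is modelled by the library type real fls (formal Laurent series with
  support bounded below); addition and multiplication are the library's.\<close>

definition hlt :: "real fls \<Rightarrow> real fls \<Rightarrow> bool" where
  "hlt x y \<longleftrightarrow> (\<exists>n::int. (\<forall>k<n. fls_nth x k = fls_nth y k) \<and> fls_nth x n < fls_nth y n)"

definition habs :: "real fls \<Rightarrow> real fls" where
  "habs x = (if hlt x 0 then - x else x)"

definition is_real_fls :: "real fls \<Rightarrow> bool" where
  "is_real_fls x \<longleftrightarrow> (\<forall>k::int. k \<noteq> 0 \<longrightarrow> fls_nth x k = 0)"

definition hyper_cauchy :: "(nat \<Rightarrow> real fls) \<Rightarrow> bool" where
  "hyper_cauchy s \<longleftrightarrow> (\<forall>\<iota>. hlt 0 \<iota> \<longrightarrow>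
     (\<exists>N::nat. \<forall>l m. N \<le> l \<and> N \<le> m \<longrightarrow> hlt (habs (s l - s m)) \<iota>))"

end

theory Submission
  imports Defs
begin

lemma key:
  fixes d :: "real fls"
  assumes r: "is_real_fls d" and h: "hlt (habs d) fls_X"
  shows "d = 0"
proof -
  have z: "\<And>k. k \<noteq> 0 \<Longrightarrow> fls_nth d k = 0" using r unfolding is_real_fls_def by blast
  have a0: "fls_nth (habs d) 0 \<le> 0"
  proof -
    obtain n where n: "\<forall>k<n. fls_nth (habs d) k = fls_nth fls_X k"
      "fls_nth (habs d) n < fls_nth fls_X n" using h unfolding hlt_def by blast
    show ?thesis
    proof (cases "n \<ge> 1")
      case True
      then have "fls_nth (habs d) 0 = fls_nth fls_X 0" using n(1) by simp
      then show ?thesis by simp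
    next
      case False
      then have "n \<le> 0" by simp
      then show ?thesis
      proof (cases "n = 0")
        case True then show ?thesis using n(2) by simp
      next
        case False
        with \<open>n \<le> 0\<close> have "fls_nth (habs d) n = 0"
          using z by (simp add: habs_def)
        then show ?thesis using n(2) \<open>n \<le> 0\<close> False by simp
      qed
    qed
  qed
  have d0: "fls_nth d 0 = 0"
  proof (cases "hlt d 0")
    case True
    then obtain n where n: "\<forall>k<n. fls_nth d k = 0" "fls_nth d n < 0"
      unfolding hlt_def by auto
    have "n = 0"
    proof (rule ccontr)
      assume "n \<noteq> 0" then have "fls_nth d n = 0" by (rule z)
      with n(2) show False by simp
    qed
    then show ?thesis using n a0 True by (simp add: habs_def)
  next
    case False
    have "\<not> fls_nth d 0 < 0"
    proof
      assume "fls_nth d 0 < 0"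
      moreover have "\<forall>k<0. fls_nth d k = fls_nth 0 k" using z by simp
      ultimately have "hlt d 0" unfolding hlt_def by auto
      with False show False by simp
    qed
    then show ?thesis using a0 False by (simp add: habs_def)
  qed
  show ?thesis
  proof (rule fls_eqI)
    fix k show "fls_nth d k = fls_nth 0 k"
      using d0 z[of k] by (cases "k = 0") simp_all
  qed
qed

theorem mainTheorem18:
  fixes s :: "nat \<Rightarrow> real fls"
  assumes "\<And>n. is_real_fls (s n)"
  shows "hyper_cauchy s \<longleftrightarrow> (\<exists>N::nat. \<forall>m\<ge>N. s m = s N)"
proof
  assume hc: "hyper_cauchy s"
  have "hlt 0 fls_X" unfolding hlt_def by (rule exI[of _ 1]) simp
  then obtain N where N: "\<forall>l m. N \<le> l \<and> N \<le> m \<longrightarrow> hlt (habs (s l - s m)) fls_X"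
    using hc unfolding hyper_cauchy_def by blast
  have "\<forall>m\<ge>N. s m = s N"
  proof (intro allI impI)
    fix m assume "N \<le> m"
    have r: "is_real_fls (s m - s N)" using assms unfolding is_real_fls_def by simp
    have "hlt (habs (s m - s N)) fls_X" using N \<open>N \<le> m\<close> by simp
    then have "s m - s N = 0" by (rule key[OF r])
    then show "s m = s N" by simp
  qed
  then show "\<exists>N::nat. \<forall>m\<ge>N. s m = s N" by blast
next
  assume "\<exists>N::nat. \<forall>m\<ge>N. s m = s N"
  then obtain N where N: "\<forall>m\<ge>N. s m = s N" by blast
  show "hyper_cauchy s"
    unfolding hyper_cauchy_def
  proof (intro allI impI)
    fix \<iota> :: "real fls" assume "hlt 0 \<iota>"
    moreover have "\<forall>l m. N \<le> l \<and> N \<le> m \<longrightarrow> habs (s l - s m) = 0"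
    proof (intro allI impI)
      fix l m :: nat assume "N \<le> l \<and> N \<le> m"
      then have "s l = s N" "s m = s N" using N by blast+
      then have "s l - s m = 0" by simp
      moreover have "\<not> hlt 0 0" unfolding hlt_def by simp
      ultimately show "habs (s l - s m) = 0" unfolding habs_def by simp
    qed
    ultimately have "\<forall>l m. N \<le> l \<and> N \<le> m \<longrightarrow> hlt (habs (s l - s m)) \<iota>" by simp
    then show "\<exists>N. \<forall>l m. N \<le> l \<and> N \<le> m \<longrightarrow> hlt (habs (s l - s m)) \<iota>" by blast
  qed
qed

end
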